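(* Define in $\mathcal{S}$ the polynomials $A_1=x_3$, $A_2=x_4$, $A_3=x_1^2+x_2^2$, $A_4=x_1x_5+x_2x_6$, $A_5=x_1x_6-x_2x_5$, $A_6=x_5^2+x_6^2$. Each $A_j$ Poisson-commutes with $x_3$, and they span (as generators) a Poisson subalgebra whose only nonzero brackets among generators (up to antisymmetry) are $\{A_2,A_3\}=-2A_3$, $\{A_2,A_6\}=2A_6$, $\{A_3,A_4\}=4A_2A_3$, $\{A_3,A_5\}=4A_1A_3$, $\{A_3,A_6\}=8(A_2A_4+A_1A_5)$, $\{A_4,A_6\}=4A_2A_6$, $\{A_5,A_6\}=4A_1A_6$. Moreover $A_1$, $A_4-A_2^2$ and $A_5-2A_1A_2$ Poisson-commute with every $A_j$.
   Context: $\mathcal{S}=\mathbb{R}[x_1,\dots,x_6]$ is the Lie–Poisson algebra of $\mathfrak{c}(2)$: its bracket is determined by the Leibniz rule and the nonzero brackets ($i<j$) $\{x_1,x_3\}=-x_2$, $\{x_1,x_4\}=x_1$, $\{x_1,x_5\}=2x_4$, $\{x_1,x_6\}=2x_3$, $\{x_2,x_3\}=x_1$, $\{x_2,x_4\}=x_2$, $\{x_2,x_5\}=-2x_3$, $\{x_2,x_6\}=2x_4$, $\{x_3,x_5\}=x_6$, $\{x_3,x_6\}=-x_5$, $\{x_4,x_5\}=x_5$, $\{x_4,x_6\}=x_6$. *)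

theory Defs
  imports "HOL-Analysis.Analysis"
begin

text \<open>Elements of S = R[x1..x6] are represented by their polynomial functions
  on points x :: nat => real (coordinates x 1, ..., x 6).  The Lie-Poisson
  bracket determined by the Leibniz rule and the brackets of the generators is
  {f,g} = sum_{i,j} {x_i,x_j} * d_i f * d_j g.\<close>

definition pd :: "nat \<Rightarrow> ((nat \<Rightarrow> real) \<Rightarrow> real) \<Rightarrow> (nat \<Rightarrow> real) \<Rightarrow> real" where
  "pd i f x = deriv (\<lambda>t. f (x(i := t))) (x i)"

text \<open>Brackets {x_i, x_j} for i < j (structure constants of c(2)).\<close>
definition lie_up :: "nat \<Rightarrow> nat \<Rightarrow> (nat \<Rightarrow> real) \<Rightarrow> real" where
  "lie_up i j x =
    (if (i,j) = (1,3) then - x 2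
     else if (i,j) = (1,4) then x 1
     else if (i,j) = (1,5) then 2 * x 4
     else if (i,j) = (1,6) then 2 * x 3
     else if (i,j) = (2,3) then x 1
     else if (i,j) = (2,4) then x 2
     else if (i,j) = (2,5) then - 2 * x 3
     else if (i,j) = (2,6) then 2 * x 4
     else if (i,j) = (3,5) then x 6
     else if (i,j) = (3,6) then - x 5
     else if (i,j) = (4,5) then x 5
     else if (i,j) = (4,6) then x 6
     else 0)"

definition lie :: "nat \<Rightarrow> nat \<Rightarrow> (nat \<Rightarrow> real) \<Rightarrow> real" where
  "lie i j x = (if i < j then lie_up i j x else if j < i then - lie_up j i x else 0)"

definition pbr :: "((nat \<Rightarrow> real) \<Rightarrow> real) \<Rightarrow> ((nat \<Rightarrow> real) \<Rightarrow> real) \<Rightarrow> (nat \<Rightarrow> real) \<Rightarrow> real" where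
  "pbr f g x = (\<Sum>i\<in>{1..6}. \<Sum>j\<in>{1..6}. lie i j x * pd i f x * pd j g x)"

definition Xc :: "nat \<Rightarrow> (nat \<Rightarrow> real) \<Rightarrow> real" where
  "Xc i x = x i"

definition A :: "nat \<Rightarrow> (nat \<Rightarrow> real) \<Rightarrow> real" where
  "A j x =
    (if j = 1 then x 3
     else if j = 2 then x 4
     else if j = 3 then x 1 ^ 2 + x 2 ^ 2
     else if j = 4 then x 1 * x 5 + x 2 * x 6
     else if j = 5 then x 1 * x 6 - x 2 * x 5
     else if j = 6 then x 5 ^ 2 + x 6 ^ 2
     else 0)"

end

theory Submission
  imports Defs
begin

lemma pd_eq: "(\<And>x. ((\<lambda>t. f (x(i:=t))) has_real_derivative D x) (at (x i))) \<Longrightarrow> pd i f = D"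
  unfolding pd_def by (auto intro!: ext DERIV_imp_deriv)

lemma der_gen: "((\<lambda>t. f (x(i:=t))) has_real_derivative D x) (at (x i))
  \<Longrightarrow> ((\<lambda>t. f (x(i:=t))) has_real_derivative D x) (at (x i))" .

lemma pdA1: "pd i (A 1) = (\<lambda>x. if i = 3 then 1 else 0)"
  apply (rule pd_eq)
  apply (cases "i = 1"; cases "i = 2"; cases "i = 3"; cases "i = 4"; cases "i = 5"; cases "i = 6")
  by (simp_all add: A_def; auto intro!: derivative_eq_intros)+

lemma pdA2: "pd i (A 2) = (\<lambda>x. if i = 4 then 1 else 0)"
  apply (rule pd_eq)
  apply (cases "i = 1"; cases "i = 2"; cases "i = 3"; cases "i = 4"; cases "i = 5"; cases "i = 6")
  by (simp_all add: A_def; auto intro!: derivative_eq_intros)+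

lemma pdA3: "pd i (A 3) = (\<lambda>x. if i = 1 then 2 * x 1 else if i = 2 then 2 * x 2 else 0)"
  apply (rule pd_eq)
  apply (cases "i = 1"; cases "i = 2"; cases "i = 3"; cases "i = 4"; cases "i = 5"; cases "i = 6")
  by (simp_all add: A_def; auto intro!: derivative_eq_intros)+

lemma pdA4: "pd i (A 4) = (\<lambda>x. if i = 1 then x 5 else if i = 5 then x 1 else if i = 2 then x 6 else if i = 6 then x 2 else 0)"
  apply (rule pd_eq)
  apply (cases "i = 1"; cases "i = 2"; cases "i = 3"; cases "i = 4"; cases "i = 5"; cases "i = 6")
  by (simp_all add: A_def; auto intro!: derivative_eq_intros)+

lemma pdA5: "pd i (A 5) = (\<lambda>x. if i = 1 then x 6 else if i = 6 then x 1 else if i = 2 then - x 5 else if i = 5 then - x 2 else 0)"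
  apply (rule pd_eq)
  apply (cases "i = 1"; cases "i = 2"; cases "i = 3"; cases "i = 4"; cases "i = 5"; cases "i = 6")
  by (simp_all add: A_def; auto intro!: derivative_eq_intros)+

lemma pdA6: "pd i (A 6) = (\<lambda>x. if i = 5 then 2 * x 5 else if i = 6 then 2 * x 6 else 0)"
  apply (rule pd_eq)
  apply (cases "i = 1"; cases "i = 2"; cases "i = 3"; cases "i = 4"; cases "i = 5"; cases "i = 6")
  by (simp_all add: A_def; auto intro!: derivative_eq_intros)+

lemma pdA1': "pd i (A (Suc 0)) = (\<lambda>x. if i = 3 then 1 else 0)"
  using pdA1 by simp

lemma pdX3: "pd i (Xc 3) = (\<lambda>x. if i = 3 then 1 else 0)"
  apply (rule pd_eq)
  by (cases "i = 3") (auto simp: Xc_def intro!: derivative_eq_intros)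

lemma pd_diff: "pd i (\<lambda>x. A 4 x - A 2 x ^ 2) = (\<lambda>x. pd i (A 4) x - 2 * A 2 x * pd i (A 2) x)"
  apply (rule pd_eq)
  apply (simp add: pdA2 pdA4)
  apply (cases "i = 1"; cases "i = 2"; cases "i = 3"; cases "i = 4"; cases "i = 5"; cases "i = 6")
  by (simp_all add: A_def; auto intro!: derivative_eq_intros)+

lemma pd_diff2: "pd i (\<lambda>x. A 5 x - 2 * A 1 x * A 2 x) = (\<lambda>x. pd i (A 5) x - 2 * pd i (A 1) x * A 2 x - 2 * A 1 x * pd i (A 2) x)"
  apply (rule pd_eq)
  apply (simp add: pdA2 pdA1 pdA1' pdA5)
  apply (cases "i = 1"; cases "i = 2"; cases "i = 3"; cases "i = 4"; cases "i = 5"; cases "i = 6")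
  by (simp_all add: A_def; auto intro!: derivative_eq_intros)+

lemma pbr_exp: "pbr f g x = (- x 2) * (pd 1 f x * pd 3 g x - pd 3 f x * pd 1 g x) + (x 1) * (pd 1 f x * pd 4 g x - pd 4 f x * pd 1 g x) + (2 * x 4) * (pd 1 f x * pd 5 g x - pd 5 f x * pd 1 g x) + (2 * x 3) * (pd 1 f x * pd 6 g x - pd 6 f x * pd 1 g x) + (x 1) * (pd 2 f x * pd 3 g x - pd 3 f x * pd 2 g x) + (x 2) * (pd 2 f x * pd 4 g x - pd 4 f x * pd 2 g x) + (- 2 * x 3) * (pd 2 f x * pd 5 g x - pd 5 f x * pd 2 g x) + (2 * x 4) * (pd 2 f x * pd 6 g x - pd 6 f x * pd 2 g x) + (x 6) * (pd 3 f x * pd 5 g x - pd 5 f x * pd 3 g x) + (- x 5) * (pd 3 f x * pd 6 g x - pd 6 f x * pd 3 g x) + (x 5) * (pd 4 f x * pd 5 g x - pd 5 f x * pd 4 g x) + (x 6) * (pd 4 f x * pd 6 g x - pd 6 f x * pd 4 g x)"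
  by (simp add: pbr_def lie_def lie_up_def numeral_eq_Suc algebra_simps)

lemma six: "{1..6::nat} = {1,2,3,4,5,6}" by auto

lemmas pbr_simps = pbr_def six lie_def lie_up_def pdA1 pdA2 pdA3 pdA4 pdA5 pdA6 pdX3 pd_diff pd_diff2 A_def

theorem mainTheorem9:
  shows "(\<forall>j\<in>{1..6}. pbr (A j) (Xc 3) = (\<lambda>x. 0))
    \<and> (\<forall>i\<in>{1..6}. \<forall>j\<in>{1..6}. pbr (A i) (A j) = (\<lambda>x. - pbr (A j) (A i) x))
    \<and> pbr (A 1) (A 2) = (\<lambda>x. 0)
    \<and> pbr (A 1) (A 3) = (\<lambda>x. 0)
    \<and> pbr (A 1) (A 4) = (\<lambda>x. 0)
    \<and> pbr (A 1) (A 5) = (\<lambda>x. 0)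
    \<and> pbr (A 1) (A 6) = (\<lambda>x. 0)
    \<and> pbr (A 2) (A 3) = (\<lambda>x. - 2 * A 3 x)
    \<and> pbr (A 2) (A 4) = (\<lambda>x. 0)
    \<and> pbr (A 2) (A 5) = (\<lambda>x. 0)
    \<and> pbr (A 2) (A 6) = (\<lambda>x. 2 * A 6 x)
    \<and> pbr (A 3) (A 4) = (\<lambda>x. 4 * A 2 x * A 3 x)
    \<and> pbr (A 3) (A 5) = (\<lambda>x. 4 * A 1 x * A 3 x)
    \<and> pbr (A 3) (A 6) = (\<lambda>x. 8 * (A 2 x * A 4 x + A 1 x * A 5 x))
    \<and> pbr (A 4) (A 5) = (\<lambda>x. 0)
    \<and> pbr (A 4) (A 6) = (\<lambda>x. 4 * A 2 x * A 6 x)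
    \<and> pbr (A 5) (A 6) = (\<lambda>x. 4 * A 1 x * A 6 x)
    \<and> (\<forall>j\<in>{1..6}. pbr (A 1) (A j) = (\<lambda>x. 0))
    \<and> (\<forall>j\<in>{1..6}. pbr (\<lambda>x. A 4 x - A 2 x ^ 2) (A j) = (\<lambda>x. 0))
    \<and> (\<forall>j\<in>{1..6}. pbr (\<lambda>x. A 5 x - 2 * A 1 x * A 2 x) (A j) = (\<lambda>x. 0))"
  apply (simp only: six ball_simps)
  apply (intro conjI)
  apply (simp_all only: pbr_exp fun_eq_iff One_nat_def[symmetric])
  apply (simp_all only: pd_diff pd_diff2)
  apply (simp_all add: pdA1 pdA1' pdA2 pdA3 pdA4 pdA5 pdA6 pdX3 pd_diff pd_diff2)
  apply (simp_all add: A_def algebra_simps power2_eq_square)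
  done

end
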